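(* Let $P\subset\mathbb{N}$ and let $(X_P,\sigma)$ be the spacing shift generated by $P$. If $(X_P,\sigma)$ is weakly mixing, then there exists a dense Mycielski subset $S\subset X_P$ with $\sigma(S)\subset S$ which is Banach scrambled for $\sigma$.
   Context: $\Sigma=\{0,1\}^{\mathbb{Z}_+}$ with the product topology and shift $\sigma(x)_n=x_{n+1}$. For $P\subset\mathbb{N}$, $X_P$ is the set of $x\in\Sigma$ such that whenever $x_i=x_j=1$ we have $|i-j|\in P\cup\{0\}$; it is closed and $\sigma$-invariant. A system $(X,T)$ is weakly mixing if $(X\times X,T\times T)$ is topologically transitive. A set $F\subset\mathbb{Z}_+$ has Banach density one if for every $\lambda<1$ there is $N\ge1$ with $\#(F\cap I)\ge\lambda\,\#(I)$ for every interval of integers $I\subset\mathbb{Z}_+$ with $\#(I)\ge N$. A pair $(x,y)$ is Banach proximal if for every $\varepsilon>0$ the set $\{n: d(T^nx,T^ny)<\varepsilon\}$ has Banach density one; it is asymptotic if $d(T^nx,T^ny)\to0$. A subset with at least two points is Banach scrambled if every pair of distinct points in it is Banach proximal but not asymptotic. A Mycielski set is a countable union of Cantor sets. *)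

theory Defs
  imports "HOL-Analysis.Analysis"
begin

text \<open>The full shift Sigma = {0,1}^Z+ is represented as the set of sequences
  nat => real with values in {0,1}; as a subspace of the product space
  nat => real (HOL-Analysis Function_Metric) it carries exactly the product topology.\<close>

definition full_shift :: "(nat \<Rightarrow> real) set" where
  "full_shift = {x. \<forall>n. x n \<in> {0, 1}}"

definition shift :: "(nat \<Rightarrow> real) \<Rightarrow> (nat \<Rightarrow> real)" where
  "shift x = (\<lambda>n. x (Suc n))"

definition spacing_shift :: "nat set \<Rightarrow> (nat \<Rightarrow> real) set" where
  "spacing_shift P = {x \<in> full_shift. \<forall>i j. x i = 1 \<and> x j = 1 \<longrightarrow>
      (if i \<le> j then j - i else i - j) \<in> P \<union> {0}}"

definition top_transitive :: "'a::topological_space set \<Rightarrow> ('a \<Rightarrow> 'a) \<Rightarrow> bool" where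
  "top_transitive X T \<longleftrightarrow> (\<forall>U V. openin (top_of_set X) U \<and> openin (top_of_set X) V
      \<and> U \<noteq> {} \<and> V \<noteq> {} \<longrightarrow> (\<exists>n. U \<inter> ((T ^^ n) -` V) \<noteq> {}))"

definition weakly_mixing :: "'a::topological_space set \<Rightarrow> ('a \<Rightarrow> 'a) \<Rightarrow> bool" where
  "weakly_mixing X T \<longleftrightarrow> top_transitive (X \<times> X) (\<lambda>(x, y). (T x, T y))"

definition banach_density_one :: "nat set \<Rightarrow> bool" where
  "banach_density_one F \<longleftrightarrow> (\<forall>l::real. l < 1 \<longrightarrow> (\<exists>N\<ge>1. \<forall>a k. k \<ge> N \<longrightarrow>
      real (card (F \<inter> {a..<a + k})) \<ge> l * real (card {a..<a + k})))"

definition banach_proximal :: "('a::metric_space \<Rightarrow> 'a) \<Rightarrow> 'a \<Rightarrow> 'a \<Rightarrow> bool" where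
  "banach_proximal T x y \<longleftrightarrow>
     (\<forall>\<epsilon>>0. banach_density_one {n. dist ((T ^^ n) x) ((T ^^ n) y) < \<epsilon>})"

definition asymptotic :: "('a::metric_space \<Rightarrow> 'a) \<Rightarrow> 'a \<Rightarrow> 'a \<Rightarrow> bool" where
  "asymptotic T x y \<longleftrightarrow> ((\<lambda>n. dist ((T ^^ n) x) ((T ^^ n) y)) \<longlonglongrightarrow> 0)"

definition banach_scrambled :: "('a::metric_space \<Rightarrow> 'a) \<Rightarrow> 'a set \<Rightarrow> bool" where
  "banach_scrambled T S \<longleftrightarrow> (\<exists>x\<in>S. \<exists>y\<in>S. x \<noteq> y) \<and>
     (\<forall>x\<in>S. \<forall>y\<in>S. x \<noteq> y \<longrightarrow> banach_proximal T x y \<and> \<not> asymptotic T x y)"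

definition cantor_set :: "'a::topological_space set \<Rightarrow> bool" where
  "cantor_set C \<longleftrightarrow> C \<noteq> {} \<and> compact C \<and> (\<forall>x\<in>C. x islimpt C)
     \<and> (\<forall>x\<in>C. connected_component_set C x = {x})"

definition mycielski :: "'a::topological_space set \<Rightarrow> bool" where
  "mycielski S \<longleftrightarrow> (\<exists>\<C>. countable \<C> \<and> (\<forall>C\<in>\<C>. cantor_set C) \<and> S = \<Union>\<C>)"

end

theory Submission
  imports Defs
begin


lemma summable_dist_terms:
  "summable (\<lambda>n. (1/2::real)^n * min (dist (x (from_nat n)) (y (from_nat n))) 1)"
  by (rule summable_comparison_test'[of "\<lambda>n. (1/2::real)^n"]) (auto simp add: summable_geometric_iff)

lemma dist_ge_coord:
  fixes x y :: "nat \<Rightarrow> real"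
  shows "(1/2::real)^(to_nat i) * min (dist (x i) (y i)) 1 \<le> dist x y"
proof -
  have "(\<Sum>n\<in>{to_nat i}. (1/2::real)^n * min (dist (x (from_nat n)) (y (from_nat n))) 1)
        \<le> (\<Sum>n. (1/2::real)^n * min (dist (x (from_nat n)) (y (from_nat n))) 1)"
    by (rule sum_le_suminf[OF summable_dist_terms]) auto
  then show ?thesis unfolding dist_fun_def by simp
qed

lemma full_shift_coord_eq:
  fixes x y :: "nat \<Rightarrow> real"
  assumes "x \<in> full_shift" "y \<in> full_shift" "dist x y < (1/2)^(to_nat i)"
  shows "x i = y i"
proof (rule ccontr)
  assume "x i \<noteq> y i"
  moreover have "x i \<in> {0,1}" "y i \<in> {0,1}" using assms(1,2) unfolding full_shift_def by auto
  ultimately have "dist (x i) (y i) = 1" by (auto simp: dist_real_def)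
  then have "(1/2::real)^(to_nat i) \<le> dist x y" using dist_ge_coord[of i x y] by simp
  with assms(3) show False by simp
qed

lemma close_if_agree:
  assumes "e > 0"
  shows "\<exists>M. \<forall>x y :: nat \<Rightarrow> real. (\<forall>i\<le>M. x i = y i) \<longrightarrow> dist x y < e"
proof -
  obtain N where N: "(1/2::real)^N < e"
    using real_arch_pow_inv[OF assms, of "1/2"] by auto
  define M where "M = Max (from_nat ` {..N} :: nat set)"
  have "\<forall>x y :: nat \<Rightarrow> real. (\<forall>i\<le>M. x i = y i) \<longrightarrow> dist x y < e"
  proof (intro allI impI)
    fix x y :: "nat \<Rightarrow> real" assume A: "\<forall>i\<le>M. x i = y i"
    have "\<And>n. n \<le> N \<Longrightarrow> from_nat n \<le> M" unfolding M_def by (rule Max_ge) auto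
    with A have "\<And>n. n \<le> N \<Longrightarrow> x (from_nat n) = y (from_nat n)" by auto
    then have "{dist (x (from_nat n)) (y (from_nat n)) |n. n \<le> N} = {0}"
      by (auto; use le0 in blast)
    then have "dist x y \<le> (1/2)^N" using dist_fun_le_dist_first_terms[of x y N] by simp
    with N show "dist x y < e" by simp
  qed
  then show ?thesis by blast
qed

lemma cylinder_openin:
  assumes "X \<subseteq> full_shift" "w \<in> full_shift"
  shows "openin (top_of_set X) {x\<in>X. \<forall>i\<le>M. x i = w i}"
proof -
  have op: "open {f :: nat \<Rightarrow> real. \<forall>i\<in>{..M}. f (id i) \<in> ball (w i) (1/2)}"
    by (rule product_topology_basis') auto
  have "{x\<in>X. \<forall>i\<le>M. x i = w i} = X \<inter> {f. \<forall>i\<in>{..M}. f (id i) \<in> ball (w i) (1/2)}"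
  proof safe
    fix x i assume "x \<in> X" "\<forall>i\<in>{..M}. x (id i) \<in> ball (w i) (1 / 2)" "i \<le> M"
    then have "dist (w i) (x i) < 1/2" by auto
    moreover have "x i \<in> {0,1}" "w i \<in> {0,1}" using assms \<open>x\<in>X\<close> unfolding full_shift_def by auto
    ultimately show "x i = w i" unfolding dist_real_def by auto
  qed auto
  then show ?thesis using op by auto
qed

lemma compact_full_shift: "compact full_shift"
proof -
  have eq: "full_shift = PiE UNIV (\<lambda>_. {0::real,1})"
    unfolding full_shift_def by (auto simp: PiE_def extensional_def)
  have "compactin (product_topology (\<lambda>_. euclidean) UNIV) (PiE UNIV (\<lambda>_::nat. {0::real,1}))"
    by (subst compactin_PiE) auto
  then show ?thesis unfolding eq euclidean_product_topology by (simp add: compactin_euclidean_iff)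
qed

lemma full_shift_component:
  assumes "C \<subseteq> full_shift" "x \<in> C"
  shows "connected_component_set C x = {x}"
proof -
  have "y = x" if "y \<in> connected_component_set C x" for y
  proof (rule ccontr)
    assume "y \<noteq> x"
    then obtain i where i: "y i \<noteq> x i" by auto
    from that obtain T where T: "connected T" "T \<subseteq> C" "x \<in> T" "y \<in> T"
      unfolding connected_component_def by auto
    have "connected ((\<lambda>z. z i) ` T)"
      by (rule connected_continuous_image[OF continuous_on_subset[OF continuous_on_product_coordinates] T(1)]) auto
    moreover have "x i \<in> (\<lambda>z. z i) ` T" "y i \<in> (\<lambda>z. z i) ` T" using T by auto
    moreover have "(\<lambda>z. z i) ` T \<subseteq> {0,1}" using T assms unfolding full_shift_def by auto
    moreover have "x i \<in> {0,1}" "y i \<in> {0,1}" using T assms unfolding full_shift_def by auto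
    ultimately have "0 \<in> (\<lambda>z. z i) ` T" "1 \<in> (\<lambda>z. z i) ` T" "connected ((\<lambda>z. z i) ` T)" using i
      by auto
    then have I: "\<And>a b c. a \<in> (\<lambda>z. z i) ` T \<Longrightarrow> b \<in> (\<lambda>z. z i) ` T \<Longrightarrow> a \<le> c \<Longrightarrow> c \<le> b
        \<Longrightarrow> c \<in> (\<lambda>z. z i) ` T"
      unfolding connected_iff_interval by blast
    have "(1/2::real) \<in> (\<lambda>z. z i) ` T"
      by (rule I[of 0 1]) (use \<open>0 \<in> (\<lambda>z. z i) ` T\<close> \<open>1 \<in> (\<lambda>z. z i) ` T\<close> in auto)
    then show False using \<open>(\<lambda>z. z i) ` T \<subseteq> {0,1}\<close> by auto
  qed
  then show ?thesis using assms connected_component_refl by fastforce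
qed

lemma funpow_shift: "(shift ^^ j) x = (\<lambda>n. x (n + j))"
  by (induction j arbitrary: x) (auto simp: shift_def)

lemma funpow_pair:
  fixes T :: "'a \<Rightarrow> 'a"
  shows "((\<lambda>(x, y). (T x, T y)) ^^ n) (x, y) = ((T ^^ n) x, (T ^^ n) y)"
proof (induction n)
  case 0 then show ?case by simp
next
  case (Suc n) then show ?case by simp
qed

lemma wm_trans:
  assumes "weakly_mixing X T"
  shows "top_transitive X T"
  unfolding top_transitive_def
proof (intro allI impI)
  fix U V assume A: "openin (top_of_set X) U \<and> openin (top_of_set X) V \<and> U \<noteq> {} \<and> V \<noteq> {}"
  define F where "F = (\<lambda>(x, y). (T x, T y))"
  have Fp: "(F ^^ n) (x, y) = ((T ^^ n) x, (T ^^ n) y)" for n x y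
    unfolding F_def by (rule funpow_pair)
  have "openin (top_of_set (X \<times> X)) (U \<times> U)" "openin (top_of_set (X \<times> X)) (V \<times> V)"
    using A by (auto intro: openin_Times)
  moreover have "U \<times> U \<noteq> {}" "V \<times> V \<noteq> {}" using A by auto
  moreover have "top_transitive (X \<times> X) F" using assms unfolding weakly_mixing_def F_def .
  ultimately obtain n where "(U \<times> U) \<inter> ((F ^^ n) -` (V \<times> V)) \<noteq> {}"
    unfolding top_transitive_def by presburger
  then obtain p where p: "p \<in> U \<times> U" "(F ^^ n) p \<in> V \<times> V" by (meson IntE ex_in_conv vimageE)
  obtain x y where "p = (x, y)" by (cases p)
  with p have "x \<in> U" "(T^^n) x \<in> V" by (auto simp: Fp)
  then show "\<exists>n. U \<inter> (T ^^ n) -` V \<noteq> {}" by blast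
qed



definition pset :: "nat set \<Rightarrow> nat set \<Rightarrow> bool" where
  "pset P F \<longleftrightarrow> (\<forall>i\<in>F. \<forall>j\<in>F. i < j \<longrightarrow> j - i \<in> P)"

definition ind :: "nat set \<Rightarrow> nat \<Rightarrow> real" where
  "ind F n = (if n \<in> F then 1 else 0)"

lemma pset_mono: "pset P F \<Longrightarrow> G \<subseteq> F \<Longrightarrow> pset P G"
  unfolding pset_def by blast

lemma in_spacingI:
  assumes "x \<in> full_shift" "pset P {n. x n = 1}"
  shows "x \<in> spacing_shift P"
  using assms unfolding spacing_shift_def pset_def
  by (auto; metis linorder_neqE_nat not_le diff_self_eq_0 less_imp_le)

lemma spacing_pset:
  assumes "x \<in> spacing_shift P"
  shows "pset P {n. x n = 1}"
  using assms unfolding spacing_shift_def pset_def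
  by (auto; metis diff_is_0_eq not_le less_imp_le zero_less_diff)

lemma spacing_full: "x \<in> spacing_shift P \<Longrightarrow> x \<in> full_shift"
  unfolding spacing_shift_def by auto

lemma spacing_shift_closed:
  assumes "x \<in> spacing_shift P"
  shows "(\<lambda>n. x (n + j)) \<in> spacing_shift P"
proof (rule in_spacingI)
  show "(\<lambda>n. x (n + j)) \<in> full_shift" using spacing_full[OF assms] unfolding full_shift_def by auto
  show "pset P {n. x (n + j) = 1}" unfolding pset_def
  proof (intro ballI impI)
    fix a b assume "a \<in> {n. x (n + j) = 1}" "b \<in> {n. x (n + j) = 1}" "a < b"
    then have "(b + j) - (a + j) \<in> P" using spacing_pset[OF assms, unfolded pset_def, rule_format, of "a+j" "b+j"] by auto
    then show "b - a \<in> P" by simp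
  qed
qed

lemma ind_full: "ind F \<in> full_shift"
  unfolding ind_def full_shift_def by auto

lemma ind_spacing: "pset P F \<Longrightarrow> ind F \<in> spacing_shift P"
  by (rule in_spacingI[OF ind_full]) (auto simp: ind_def pset_def)

lemma EXT:
  assumes tt: "top_transitive (spacing_shift P) shift" and fin: "finite F" and ps: "pset P F"
  shows "\<exists>q\<ge>N. \<forall>f\<in>F. f < q \<and> q - f \<in> P"
proof -
  define M where "M = N + sum id F + 1"
  have fM: "f < M" if "f \<in> F" for f
  proof -
    have "f \<le> sum id F" using member_le_sum[of f F id] that fin by auto
    then show ?thesis unfolding M_def by simp
  qed
  let ?X = "spacing_shift P"
  define U where "U = {x\<in>?X. \<forall>i\<le>M. x i = ind F i}"
  define V where "V = {x\<in>?X. \<forall>i\<le>M. x i = ind {M} i}"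
  have XS: "?X \<subseteq> full_shift" using spacing_full by blast
  have "openin (top_of_set ?X) U" unfolding U_def by (rule cylinder_openin[OF XS ind_full])
  moreover have "openin (top_of_set ?X) V" unfolding V_def by (rule cylinder_openin[OF XS ind_full])
  moreover have "ind F \<in> U" unfolding U_def using ind_spacing[OF ps] by auto
  moreover have "ind {M} \<in> V" unfolding V_def using ind_spacing[of P "{M}"] by (auto simp: pset_def)
  ultimately obtain n where "U \<inter> (shift ^^ n) -` V \<noteq> {}"
    using tt unfolding top_transitive_def by blast
  then obtain x where x: "x \<in> U" "(shift ^^ n) x \<in> V" by auto
  have xX: "x \<in> ?X" using x unfolding U_def by auto
  have xq: "x (M + n) = 1" using x(2) unfolding V_def funpow_shift by (auto simp: ind_def)
  have xf: "x f = 1" if "f \<in> F" for f using x(1) fM[OF that] that unfolding U_def by (auto simp: ind_def)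
  have "\<forall>f\<in>F. f < M + n \<and> M + n - f \<in> P"
  proof
    fix f assume f: "f \<in> F"
    have "f < M + n" using fM[OF f] by simp
    moreover have "M + n - f \<in> P" using spacing_pset[OF xX] xq xf[OF f] \<open>f < M + n\<close>
      unfolding pset_def by auto
    ultimately show "f < M + n \<and> M + n - f \<in> P" by simp
  qed
  moreover have "M + n \<ge> N" unfolding M_def by simp
  ultimately show ?thesis by blast
qed

definition Fs :: "nat set \<Rightarrow> nat \<Rightarrow> nat set" where
  "Fs P k = (if pset P (set (fst (from_nat k :: nat list \<times> nat)))
                \<and> set (fst (from_nat k :: nat list \<times> nat)) \<subseteq> {..<snd (from_nat k :: nat list \<times> nat)}
             then set (fst (from_nat k :: nat list \<times> nat)) else {})"

definition ms :: "nat \<Rightarrow> nat" where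
  "ms k = snd (from_nat k :: nat list \<times> nat)"

definition sd :: "nat \<Rightarrow> nat" where "sd s = fst (prod_decode s)"
definition ix :: "nat \<Rightarrow> nat" where "ix s = snd (prod_decode s)"

lemma sd_enc[simp]: "sd (prod_encode (k, i)) = k" and ix_enc[simp]: "ix (prod_encode (k,i)) = i"
  by (auto simp: sd_def ix_def)

lemma ix_le: "ix s \<le> s"
  unfolding ix_def by (metis le_prod_encode_2 prod_decode_inverse prod.collapse)

lemma Fs_lt: "f \<in> Fs P k \<Longrightarrow> f < ms k"
  unfolding Fs_def ms_def by (auto split: if_splits)

lemma Fs_pset: "pset P (Fs P k)"
  unfolding Fs_def by (auto simp: pset_def)

lemma Fs_finite: "finite (Fs P k)"
  unfolding Fs_def by auto

definition nxt :: "nat set \<Rightarrow> nat \<Rightarrow> nat list \<Rightarrow> nat" where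
  "nxt P s h = (SOME q. sum_list h + s + ms (sd s) < q \<and> (\<forall>f\<in>Fs P (sd s). f < q \<and> q - f \<in> P)
      \<and> (\<forall>t<length h. sd t = sd s \<longrightarrow> h!t < q \<and> q - h!t \<in> P))"

primrec H :: "nat set \<Rightarrow> nat \<Rightarrow> nat list" where
  "H P 0 = []"
| "H P (Suc s) = H P s @ [nxt P s (H P s)]"

definition r :: "nat set \<Rightarrow> nat \<Rightarrow> nat" where
  "r P s = nxt P s (H P s)"

lemma H_eq: "H P s = map (r P) [0..<s]"
  by (induction s) (auto simp: r_def)

definition Rprop :: "nat set \<Rightarrow> nat \<Rightarrow> bool" where
  "Rprop P s \<longleftrightarrow> sum_list (map (r P) [0..<s]) + s + ms (sd s) < r P s
     \<and> (\<forall>f\<in>Fs P (sd s). f < r P s \<and> r P s - f \<in> P)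
     \<and> (\<forall>t<s. sd t = sd s \<longrightarrow> r P t < r P s \<and> r P s - r P t \<in> P)"

lemma RpD1: "Rprop P s \<Longrightarrow> f \<in> Fs P (sd s) \<Longrightarrow> f < r P s \<and> r P s - f \<in> P"
  unfolding Rprop_def by blast

lemma RpD2: "Rprop P s \<Longrightarrow> t < s \<Longrightarrow> sd t = sd s \<Longrightarrow> r P t < r P s \<and> r P s - r P t \<in> P"
  unfolding Rprop_def by blast

lemma R_holds:
  assumes tt: "top_transitive (spacing_shift P) shift"
  shows "Rprop P s"
proof (induction s rule: less_induct)
  case (less s)
  define k where "k = sd s"
  define F where "F = Fs P k \<union> r P ` {t. t < s \<and> sd t = k}"
  have fin: "finite F" unfolding F_def using Fs_finite by simp
  have ps: "pset P F" unfolding pset_def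
  proof (intro ballI impI)
    fix i j assume i: "i \<in> F" and j: "j \<in> F" and ij: "i < j"
    show "j - i \<in> P"
    proof (cases "j \<in> Fs P k")
      case jF: True
      show ?thesis
      proof (cases "i \<in> Fs P k")
        case True then show ?thesis using Fs_pset[of P k] jF ij unfolding pset_def by blast
      next
        case False
        then obtain t where t: "t < s" "sd t = k" "i = r P t" using i unfolding F_def by blast
        have "j < r P t" using RpD1[OF less[OF t(1)], of j] t jF by simp
        then show ?thesis using ij t by simp
      qed
    next
      case jF: False
      then obtain t where t: "t < s" "sd t = k" "j = r P t" using j unfolding F_def by blast
      show ?thesis
      proof (cases "i \<in> Fs P k")
        case True then show ?thesis using RpD1[OF less[OF t(1)], of i] t by simp
      next
        case False
        then obtain t' where t': "t' < s" "sd t' = k" "i = r P t'" using i unfolding F_def by blast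
        have "\<not> t < t'" using RpD2[OF less[OF t'(1)], of t] t t' ij by auto
        moreover have "t \<noteq> t'" using ij t t' by auto
        ultimately have "t' < t" by simp
        then show ?thesis using RpD2[OF less[OF t(1)], of t'] t t' by simp
      qed
    qed
  qed
  obtain q where q: "q \<ge> sum_list (map (r P) [0..<s]) + s + ms k + 1" "\<forall>f\<in>F. f < q \<and> q - f \<in> P"
    using EXT[OF tt fin ps, of "sum_list (map (r P) [0..<s]) + s + ms k + 1"] by blast
  let ?h = "map (r P) [0..<s]"
  define Q where "Q = (\<lambda>q. sum_list ?h + s + ms (sd s) < q \<and> (\<forall>f\<in>Fs P (sd s). f < q \<and> q - f \<in> P)
      \<and> (\<forall>t<length ?h. sd t = sd s \<longrightarrow> ?h!t < q \<and> q - ?h!t \<in> P))"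
  have "r P s = nxt P s ?h" by (simp only: r_def[of P s] H_eq[of P s])
  then have nxt_eq: "r P s = (SOME q. Q q)" unfolding nxt_def Q_def .
  have "Q q" unfolding Q_def
  proof (intro conjI allI impI ballI)
    show "sum_list ?h + s + ms (sd s) < q" using q(1) unfolding k_def by simp
  next
    fix f assume "f \<in> Fs P (sd s)"
    then show "f < q" "q - f \<in> P" using q(2) unfolding F_def k_def by auto
  next
    fix t assume "t < length ?h" "sd t = sd s"
    then have "r P t \<in> F" unfolding F_def k_def by auto
    then show "?h!t < q" "q - ?h!t \<in> P" using q(2) \<open>t < length ?h\<close> by auto
  qed
  then have "Q (SOME q. Q q)" by (rule someI)
  then have QR: "Q (r P s)" unfolding nxt_eq .
  show ?case unfolding Rprop_def
  proof (intro conjI allI impI ballI)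
    show "sum_list ?h + s + ms (sd s) < r P s" using QR unfolding Q_def by blast
  next
    fix f assume "f \<in> Fs P (sd s)"
    then show "f < r P s" "r P s - f \<in> P" using QR unfolding Q_def by blast+
  next
    fix t assume t: "t < s" "sd t = sd s"
    have "?h!t < r P s \<and> r P s - ?h!t \<in> P" using QR t unfolding Q_def by simp
    then show "r P t < r P s" "r P s - r P t \<in> P" using t by simp_all
  qed
qed



definition val :: "(nat \<Rightarrow> real) \<Rightarrow> nat \<Rightarrow> real" where
  "val b i = (if even i then 1 else b (fst (prod_decode (i div 2))))"

definition enc :: "nat set \<Rightarrow> nat \<Rightarrow> (nat \<Rightarrow> real) \<Rightarrow> nat \<Rightarrow> real" where
  "enc P k b n = (if n \<in> Fs P k then 1 else
     if n \<in> range (r P) \<and> sd (inv (r P) n) = k then val b (ix (inv (r P) n)) else 0)"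

definition pt :: "nat set \<Rightarrow> nat \<Rightarrow> nat \<Rightarrow> (nat \<Rightarrow> real) \<Rightarrow> nat \<Rightarrow> real" where
  "pt P k j b = (\<lambda>n. enc P k b (n + j))"

lemma val_even: "val b (2*u) = 1" unfolding val_def by simp
lemma val_odd: "val b (Suc (2*prod_encode (t,u))) = b t" unfolding val_def by simp
lemma val_full: "b \<in> full_shift \<Longrightarrow> val b i \<in> {0,1}" unfolding val_def full_shift_def by auto

lemma fst_decode_le: "fst (prod_decode u) \<le> u"
  by (metis le_prod_encode_1 prod_decode_inverse prod.collapse)

context
  fixes P :: "nat set"
  assumes tt: "top_transitive (spacing_shift P) shift"
begin

lemma Rp: "Rprop P s" by (rule R_holds[OF tt])

lemma r_gap: "t < s \<Longrightarrow> r P t + s < r P s"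
proof -
  assume ts: "t < s"
  have "r P t \<le> sum_list (map (r P) [0..<s])"
    by (rule member_le_sum_list) (use ts in auto)
  then show ?thesis using Rp[of s] unfolding Rprop_def by linarith
qed

lemma r_ge: "s < r P s" using Rp[of s] unfolding Rprop_def by linarith

lemma r_ms: "ms (sd s) < r P s" using Rp[of s] unfolding Rprop_def by linarith

lemma r_less_iff: "r P t < r P s \<longleftrightarrow> t < s"
  using r_gap by (metis add_lessD1 linorder_neqE_nat order.asym)

lemma r_inj: "inj (r P)"
  by (metis injI linorder_neqE_nat r_less_iff order.irrefl)

lemma inv_r[simp]: "inv (r P) (r P s) = s"
  using r_inj by simp

lemma Fs_lt_r: "f \<in> Fs P (sd s) \<Longrightarrow> f < r P s"
  using Fs_lt r_ms by (meson order.strict_trans)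

lemma r_notin_Fs: "sd s = k \<Longrightarrow> r P s \<notin> Fs P k"
  using Fs_lt_r by blast

lemma enc_r: "sd s = k \<Longrightarrow> enc P k b (r P s) = val b (ix s)"
  unfolding enc_def using r_notin_Fs by auto

lemma enc_nz: "enc P k b n \<noteq> 0 \<Longrightarrow> n \<in> Fs P k \<or> (\<exists>s. n = r P s \<and> sd s = k)"
  unfolding enc_def by (auto split: if_splits)

lemma enc_full: "b \<in> full_shift \<Longrightarrow> enc P k b \<in> full_shift"
  unfolding full_shift_def enc_def using val_full[of b] by (auto simp: full_shift_def)

lemma Q_pset: "pset P (Fs P k \<union> {r P s | s. sd s = k})"
  unfolding pset_def
proof (intro ballI impI)
  fix i j assume i: "i \<in> Fs P k \<union> {r P s | s. sd s = k}" and j: "j \<in> Fs P k \<union> {r P s | s. sd s = k}"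
    and ij: "i < j"
  show "j - i \<in> P"
  proof (cases "j \<in> Fs P k")
    case jF: True
    show ?thesis
    proof (cases "i \<in> Fs P k")
      case True then show ?thesis using Fs_pset[of P k] jF ij unfolding pset_def by auto
    next
      case False
      then obtain t where t: "sd t = k" "i = r P t" using i by auto
      have "j < r P t" using Fs_lt_r t jF by auto
      then show ?thesis using ij t by simp
    qed
  next
    case jF: False
    then obtain s where s: "sd s = k" "j = r P s" using j by auto
    show ?thesis
    proof (cases "i \<in> Fs P k")
      case True then show ?thesis using Rp[of s] s unfolding Rprop_def by auto
    next
      case False
      then obtain t where t: "sd t = k" "i = r P t" using i by auto
      have "t < s" using ij s t r_less_iff by auto
      then show ?thesis using Rp[of s] s t unfolding Rprop_def by auto
    qed
  qed
qed

lemma enc_spacing: "b \<in> full_shift \<Longrightarrow> enc P k b \<in> spacing_shift P"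
proof (rule in_spacingI[OF enc_full])
  assume "b \<in> full_shift"
  have "{n. enc P k b n = 1} \<subseteq> Fs P k \<union> {r P s | s. sd s = k}"
  proof
    fix n assume "n \<in> {n. enc P k b n = 1}"
    then have "enc P k b n \<noteq> 0" by simp
    from enc_nz[OF this] show "n \<in> Fs P k \<union> {r P s | s. sd s = k}" by blast
  qed
  then show "pset P {n. enc P k b n = 1}" using Q_pset pset_mono by blast
qed

lemma pt_spacing: "b \<in> full_shift \<Longrightarrow> pt P k j b \<in> spacing_shift P"
  unfolding pt_def by (rule spacing_shift_closed[OF enc_spacing])

lemma pt_full: "b \<in> full_shift \<Longrightarrow> pt P k j b \<in> full_shift"
  using pt_spacing spacing_full by blast

lemma pt_cont: "continuous_on full_shift (\<lambda>b. pt P k j b)"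
proof (rule continuous_on_coordinatewise_then_product)
  fix n
  define m where "m = n + j"
  have eq: "(\<lambda>b. pt P k j b n) = (\<lambda>b. enc P k b m)" unfolding pt_def m_def by simp
  show "continuous_on full_shift (\<lambda>b. pt P k j b n)"
    unfolding eq enc_def val_def
    by (cases "m \<in> Fs P k"; cases "m \<in> range (r P) \<and> sd (inv (r P) m) = k";
        cases "even (ix (inv (r P) m))")
       (auto intro: continuous_on_subset[OF continuous_on_product_coordinates])
qed

lemma pt_perfect:
  assumes b: "b \<in> full_shift" and e: "e > 0"
  shows "\<exists>b'\<in>full_shift. pt P k j b' \<noteq> pt P k j b \<and> dist (pt P k j b') (pt P k j b) < e"
proof -
  obtain M where M: "\<forall>x y :: nat \<Rightarrow> real. (\<forall>i\<le>M. x i = y i) \<longrightarrow> dist x y < e"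
    using close_if_agree[OF e] by blast
  define t where "t = j + M + 1"
  define b' where "b' = b(t := 1 - b t)"
  have b'f: "b' \<in> full_shift" using b unfolding b'_def full_shift_def by auto
  have agree: "pt P k j b' n = pt P k j b n" if "n \<le> M" for n
  proof -
    have "enc P k b' (n + j) = enc P k b (n + j)"
    proof (cases "n + j \<in> range (r P) \<and> sd (inv (r P) (n + j)) = k")
      case True
      then obtain s where s: "n + j = r P s" by auto
      have "ix s \<le> s" by (rule ix_le)
      moreover have "s < n + j" using r_ge[of s] s by simp
      ultimately have "ix s < t" using that unfolding t_def by simp
      then have "val b' (ix s) = val b (ix s)"
        unfolding val_def b'_def using fst_decode_le[of "ix s div 2"] by auto
      then show ?thesis unfolding enc_def using s by simp
    next
      case False then show ?thesis unfolding enc_def by auto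
    qed
    then show ?thesis unfolding pt_def by simp
  qed
  then have "dist (pt P k j b') (pt P k j b) < e" using M by blast
  moreover have "pt P k j b' \<noteq> pt P k j b"
  proof
    assume eq: "pt P k j b' = pt P k j b"
    define s0 where "s0 = prod_encode (k, Suc (2*prod_encode (t,0)))"
    have "t \<le> prod_encode (t,0)" by (rule le_prod_encode_1)
    moreover have "Suc (2*prod_encode (t,0)) \<le> s0" unfolding s0_def by (rule le_prod_encode_2)
    ultimately have "j < r P s0" using r_ge[of s0] unfolding t_def by linarith
    then have "pt P k j b' (r P s0 - j) = enc P k b' (r P s0)" "pt P k j b (r P s0 - j) = enc P k b (r P s0)"
      unfolding pt_def by auto
    moreover have "enc P k b' (r P s0) = b' t" "enc P k b (r P s0) = b t"
      using enc_r[of s0 k] val_odd unfolding s0_def by auto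
    ultimately have "b' t = b t" using eq by metis
    moreover have "b t = 0 \<or> b t = 1" using b unfolding full_shift_def by auto
    ultimately show False unfolding b'_def by auto
  qed
  ultimately show ?thesis using b'f by blast
qed

lemma pt_cantor: "cantor_set ((\<lambda>b. pt P k j b) ` full_shift)"
  unfolding cantor_set_def
proof (intro conjI ballI)
  show "(\<lambda>b. pt P k j b) ` full_shift \<noteq> {}" unfolding full_shift_def by auto
  show "compact ((\<lambda>b. pt P k j b) ` full_shift)"
    by (rule compact_continuous_image[OF pt_cont compact_full_shift])
  fix x assume x: "x \<in> (\<lambda>b. pt P k j b) ` full_shift"
  then obtain b where b: "b \<in> full_shift" "x = pt P k j b" by auto
  show "x islimpt (\<lambda>b. pt P k j b) ` full_shift"
    unfolding islimpt_approachable
  proof (intro allI impI)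
    fix e :: real assume "e > 0"
    then obtain b' where "b' \<in> full_shift" "pt P k j b' \<noteq> pt P k j b" "dist (pt P k j b') (pt P k j b) < e"
      using pt_perfect[OF b(1)] by blast
    then show "\<exists>x'\<in>(\<lambda>b. pt P k j b) ` full_shift. x' \<noteq> x \<and> dist x' x < e" using b by blast
  qed
  show "connected_component_set ((\<lambda>b. pt P k j b) ` full_shift) x = {x}"
    by (rule full_shift_component[OF _ x]) (use pt_full in auto)
qed

definition SS :: "(nat \<Rightarrow> real) set" where
  "SS = {pt P k j b | k j b. b \<in> full_shift}"

lemma SS_dense: "spacing_shift P \<subseteq> closure SS"
proof
  fix z assume z: "z \<in> spacing_shift P"
  show "z \<in> closure SS" unfolding closure_approachable
  proof (intro allI impI)
    fix e :: real assume "e > 0"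
    then obtain M where M: "\<forall>x y :: nat \<Rightarrow> real. (\<forall>i\<le>M. x i = y i) \<longrightarrow> dist x y < e"
      using close_if_agree by blast
    define A where "A = {i. i \<le> M \<and> z i = 1}"
    have finA: "finite A" unfolding A_def by (rule finite_subset[of _ "{..M}"]) auto
    define L where "L = sorted_list_of_set A"
    have setL: "set L = A" unfolding L_def using finA by simp
    define k where "k = to_nat (L, Suc M)"
    have fk: "(from_nat k :: nat list \<times> nat) = (L, Suc M)" unfolding k_def by (rule from_nat_to_nat)
    have psA: "pset P A" by (rule pset_mono[OF spacing_pset[OF z]]) (auto simp: A_def)
    have AsubM: "A \<subseteq> {..<Suc M}" unfolding A_def by auto
    have FsA: "Fs P k = A" unfolding Fs_def fk using psA setL AsubM by simp
    have msk: "ms k = Suc M" unfolding ms_def fk by simp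
    define x where "x = pt P k 0 (\<lambda>_. 0)"
    have "x i = z i" if "i \<le> M" for i
    proof (cases "z i = 1")
      case True then show ?thesis unfolding x_def pt_def enc_def FsA A_def using that by simp
    next
      case False
      then have zi: "z i = 0" using spacing_full[OF z] unfolding full_shift_def by auto
      have notr: "\<not> (i = r P s \<and> sd s = k)" for s using r_ms[of s] msk that by auto
      have "enc P k (\<lambda>_. 0) i = 0"
      proof (rule ccontr)
        assume "enc P k (\<lambda>_. 0) i \<noteq> 0"
        from enc_nz[OF this] show False using notr FsA False unfolding A_def by auto
      qed
      then show ?thesis unfolding x_def pt_def using zi by simp
    qed
    then have "\<forall>i\<le>M. x i = z i" by blast
    then have "dist x z < e" using M by blast
    moreover have "x \<in> SS" unfolding SS_def x_def
      by (rule CollectI, rule exI[of _ k], rule exI[of _ 0], rule exI[of _ "\<lambda>_. 0"]) (simp add: full_shift_def)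
    ultimately show "\<exists>x\<in>SS. dist x z < e" by blast
  qed
qed

lemma pt_diff:
  assumes b: "b \<in> full_shift" and b': "b' \<in> full_shift" and ne: "pt P k j b \<noteq> pt P k' j' b'"
  shows "\<exists>n\<ge>N. pt P k j b n \<noteq> pt P k' j' b' n"
proof (cases "k = k' \<and> j = j'")
  case True
  then have "b \<noteq> b'" using ne by auto
  then obtain t where t: "b t \<noteq> b' t" by auto
  define s where "s = prod_encode (k, Suc (2*prod_encode (t, N + j)))"
  have "N + j \<le> prod_encode (t, N + j)" by (rule le_prod_encode_2)
  moreover have "Suc (2*prod_encode (t, N + j)) \<le> s" unfolding s_def by (rule le_prod_encode_2)
  ultimately have big: "N + j < r P s" using r_ge[of s] by arith
  have "pt P k j b (r P s - j) = b t" "pt P k' j' b' (r P s - j) = b' t"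
    using big True enc_r[of s k] val_odd unfolding pt_def s_def by auto
  then show ?thesis using t big by (intro exI[of _ "r P s - j"]) auto
next
  case False
  define u where "u = N + j + j' + ms k' + 1"
  define s where "s = prod_encode (k, 2*u)"
  have "2*u \<le> s" unfolding s_def by (rule le_prod_encode_2)
  then have big: "2*u < r P s" using r_ge[of s] by linarith
  have us: "u \<le> s" using \<open>2*u \<le> s\<close> by linarith
  have ur: "u < r P s" using big by linarith
  define d where "d = r P s - j"
  have d: "r P s = d + j" using ur unfolding d_def u_def by simp
  have "pt P k j b d = enc P k b (r P s)"
    using d unfolding pt_def by simp
  also have "\<dots> = val b (2*u)" using enc_r[of s k] unfolding s_def by simp
  finally have v1: "pt P k j b d = 1" using val_even by simp
  have v2: "pt P k' j' b' d \<noteq> 1"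
  proof
    assume "pt P k' j' b' d = 1"
    then have "enc P k' b' (d + j') \<noteq> 0" unfolding pt_def by simp
    from enc_nz[OF this] show False
    proof
      assume "d + j' \<in> Fs P k'"
      then have "d + j' < ms k'" by (rule Fs_lt)
      then show False using ur d unfolding u_def by linarith
    next
      assume "\<exists>s'. d + j' = r P s' \<and> sd s' = k'"
      then obtain s' where s': "d + j' = r P s'" "sd s' = k'" by auto
      consider "s' = s" | "s' < s" | "s < s'" by linarith
      then show False
      proof cases
        case 1
        then have "k' = k" using s' unfolding s_def by simp
        moreover have "j = j'" using s' 1 d by simp
        ultimately show False using False by simp
      next
        case 2
        then have "r P s' + s < r P s" by (rule r_gap)
        then show False using s' d us unfolding u_def by linarith
      next
        case 3
        then have "r P s + s' < r P s'" by (rule r_gap)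
        then show False using s' d us 3 unfolding u_def by linarith
      qed
    qed
  qed
  have "N \<le> d" using ur d unfolding u_def by linarith
  then show ?thesis using v1 v2 by (intro exI[of _ d]) auto
qed
end



definition sparse :: "nat set \<Rightarrow> bool" where
  "sparse A \<longleftrightarrow> (\<forall>G>0. \<exists>B. \<forall>a L. G * card (A \<inter> {a..<a+L}) \<le> B + L)"

lemma sparse_subset: "sparse A \<Longrightarrow> C \<subseteq> A \<Longrightarrow> sparse C"
  unfolding sparse_def
proof (intro allI impI)
  fix G :: nat assume "\<forall>G>0. \<exists>B. \<forall>a L. G * card (A \<inter> {a..<a+L}) \<le> B + L" "C \<subseteq> A" "G > 0"
  then obtain B where B: "\<forall>a L. G * card (A \<inter> {a..<a+L}) \<le> B + L" by blast
  have "G * card (C \<inter> {a..<a+L}) \<le> B + L" for a L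
  proof -
    have "card (C \<inter> {a..<a+L}) \<le> card (A \<inter> {a..<a+L})"
      by (rule card_mono) (use \<open>C \<subseteq> A\<close> in auto)
    then have "G * card (C \<inter> {a..<a+L}) \<le> G * card (A \<inter> {a..<a+L})" by simp
    then show ?thesis using B by (meson order.trans)
  qed
  then show "\<exists>B. \<forall>a L. G * card (C \<inter> {a..<a+L}) \<le> B + L" by blast
qed

lemma sparse_Un: "sparse A \<Longrightarrow> sparse C \<Longrightarrow> sparse (A \<union> C)"
  unfolding sparse_def
proof (intro allI impI)
  fix G :: nat
  assume A: "\<forall>G>0. \<exists>B. \<forall>a L. G * card (A \<inter> {a..<a+L}) \<le> B + L"
    and C: "\<forall>G>0. \<exists>B. \<forall>a L. G * card (C \<inter> {a..<a+L}) \<le> B + L" and G: "G > 0"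
  obtain B1 where B1: "\<forall>a L. (2*G) * card (A \<inter> {a..<a+L}) \<le> B1 + L" using A G by (meson mult_pos_pos zero_less_numeral)
  obtain B2 where B2: "\<forall>a L. (2*G) * card (C \<inter> {a..<a+L}) \<le> B2 + L" using C G by (meson mult_pos_pos zero_less_numeral)
  have "G * card ((A \<union> C) \<inter> {a..<a+L}) \<le> (B1 + B2) + L" for a L
  proof -
    have "card ((A \<union> C) \<inter> {a..<a+L}) \<le> card (A \<inter> {a..<a+L}) + card (C \<inter> {a..<a+L})"
      by (metis Int_Un_distrib2 card_Un_le)
    then have "G * card ((A \<union> C) \<inter> {a..<a+L}) \<le> G * card (A \<inter> {a..<a+L}) + G * card (C \<inter> {a..<a+L})"
      by (metis add_mult_distrib2 mult_le_mono2)
    moreover have "2 * (G * card (A \<inter> {a..<a+L})) \<le> B1 + L" using B1 by (simp add: mult.assoc)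
    moreover have "2 * (G * card (C \<inter> {a..<a+L})) \<le> B2 + L" using B2 by (simp add: mult.assoc)
    ultimately show ?thesis by linarith
  qed
  then show "\<exists>B. \<forall>a L. G * card ((A \<union> C) \<inter> {a..<a+L}) \<le> B + L" by blast
qed

lemma sparse_finite: "finite A \<Longrightarrow> sparse A"
  unfolding sparse_def
proof (intro allI impI)
  fix G :: nat assume "finite A" "G > 0"
  have "G * card (A \<inter> {a..<a+L}) \<le> G * card A + L" for a L
  proof -
    have "card (A \<inter> {a..<a+L}) \<le> card A" by (rule card_mono) (use \<open>finite A\<close> in auto)
    then show ?thesis by (metis mult_le_mono2 trans_le_add1)
  qed
  then show "\<exists>B. \<forall>a L. G * card (A \<inter> {a..<a+L}) \<le> B + L" by blast
qed

lemma card_shift_window: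
  fixes A :: "nat set"
  shows "card ({n. n + j \<in> A} \<inter> {a..<a+L}) \<le> card (A \<inter> {a+j..<a+j+L})"
proof (rule card_inj_on_le[of "\<lambda>n. n + j"])
  show "inj_on (\<lambda>n. n + j) ({n. n + j \<in> A} \<inter> {a..<a+L})" by (rule inj_onI) simp
  show "(\<lambda>n. n + j) ` ({n. n + j \<in> A} \<inter> {a..<a+L}) \<subseteq> A \<inter> {a+j..<a+j+L}" by auto
qed auto

lemma sparse_shift: "sparse A \<Longrightarrow> sparse {n. n + j \<in> A}"
  unfolding sparse_def
proof (intro allI impI)
  fix G :: nat assume "\<forall>G>0. \<exists>B. \<forall>a L. G * card (A \<inter> {a..<a+L}) \<le> B + L" "G > 0"
  then obtain B where B: "\<forall>a L. G * card (A \<inter> {a..<a+L}) \<le> B + L" by blast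
  have "G * card ({n. n + j \<in> A} \<inter> {a..<a+L}) \<le> B + L" for a L
  proof -
    have "G * card ({n. n + j \<in> A} \<inter> {a..<a+L}) \<le> G * card (A \<inter> {a+j..<a+j+L})"
      using card_shift_window mult_le_mono2 by blast
    then show ?thesis using B[rule_format, of "a+j" L] by linarith
  qed
  then show "\<exists>B. \<forall>a L. G * card ({n. n + j \<in> A} \<inter> {a..<a+L}) \<le> B + L" by blast
qed

lemma gap_mono:
  assumes gap: "\<And>t s. t < s \<Longrightarrow> f t + s < (f s :: nat)"
  shows "f t < f s \<longleftrightarrow> t < s"
  by (metis add_lessD1 gap linorder_neqE_nat order.asym)

lemma gap_count:
  assumes gap: "\<And>t s. t < s \<Longrightarrow> f t + s < (f s :: nat)" and G: "G > 0"
  shows "G * card (f ` {G..} \<inter> {a..<a+L}) \<le> L + G"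
proof (induction L arbitrary: a rule: less_induct)
  case (less L)
  define T where "T = f ` {G..} \<inter> {a..<a+L}"
  have finT: "finite T" unfolding T_def by auto
  show ?case
  proof (cases "T = {}")
    case True then show ?thesis unfolding T_def by simp
  next
    case False
    define p where "p = Min T"
    have pT: "p \<in> T" unfolding p_def using finT False by simp
    then obtain s where s: "s \<ge> G" "p = f s" "a \<le> p" "p < a + L" unfolding T_def by auto
    have pmin: "p \<le> q" if "q \<in> T" for q unfolding p_def using finT that by simp
    have far: "p + G \<le> q" if "q \<in> T" "q \<noteq> p" for q
    proof -
      have "q \<in> f ` {G..}" using that(1) unfolding T_def by simp
      then obtain s' where s': "q = f s'" by blast
      have "p < q" using pmin[OF that(1)] that(2) by simp
      then have "s < s'" using gap_mono[of f s s', OF gap] s s' by simp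
      then have "f s + s' < f s'" by (rule gap)
      then show ?thesis using s s' \<open>s < s'\<close> by linarith
    qed
    show ?thesis
    proof (cases "a + L \<le> p + G")
      case True
      have "T \<subseteq> {p}"
      proof
        fix q assume q: "q \<in> T"
        show "q \<in> {p}"
        proof (rule ccontr)
          assume "q \<notin> {p}"
          then have "p + G \<le> q" using far q by simp
          moreover have "q < a + L" using q unfolding T_def by simp
          ultimately show False using True by linarith
        qed
      qed
      then have "card T \<le> card {p}" by (rule card_mono[rotated]) simp
      then have "card T \<le> 1" by simp
      then have "G * card T \<le> G * 1" by (rule mult_le_mono2)
      then have "G * card T \<le> L + G" by linarith
      then show ?thesis unfolding T_def .
    next
      case False
      define L' where "L' = a + L - (p + G)"
      have L'L: "L' < L" unfolding L'_def using s G False by linarith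
      have eqw: "p + G + L' = a + L" unfolding L'_def using False by simp
      have "T \<subseteq> insert p (f ` {G..} \<inter> {p+G..<p+G+L'})"
      proof
        fix q assume q: "q \<in> T"
        show "q \<in> insert p (f ` {G..} \<inter> {p+G..<p+G+L'})"
        proof (cases "q = p")
          case False
          then have "p + G \<le> q" using far q by simp
          then show ?thesis using q eqw unfolding T_def by auto
        qed simp
      qed
      then have "card T \<le> card (insert p (f ` {G..} \<inter> {p+G..<p+G+L'}))"
        by (rule card_mono[rotated]) auto
      also have "\<dots> \<le> Suc (card (f ` {G..} \<inter> {p+G..<p+G+L'}))" by (rule card_insert_le_m1) auto
      finally have "G * card T \<le> G * Suc (card (f ` {G..} \<inter> {p+G..<p+G+L'}))" by (rule mult_le_mono2)
      also have "\<dots> = G + G * card (f ` {G..} \<inter> {p+G..<p+G+L'})" by simp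
      also have "\<dots> \<le> G + (L' + G)" using less[OF L'L, of "p+G"] by simp
      finally have "G * card T \<le> G + (L' + G)" .
      moreover have "L' + G \<le> L" using eqw s by linarith
      ultimately show ?thesis unfolding T_def by linarith
    qed
  qed
qed

lemma sparse_gap:
  assumes gap: "\<And>t s. t < s \<Longrightarrow> f t + s < (f s :: nat)"
  shows "sparse (range f)"
  unfolding sparse_def
proof (intro allI impI)
  fix G :: nat assume G: "G > 0"
  have "G * card (range f \<inter> {a..<a+L}) \<le> (G*G + G) + L" for a L
  proof -
    have "range f \<inter> {a..<a+L} \<subseteq> f ` {..<G} \<union> (f ` {G..} \<inter> {a..<a+L})"
    proof
      fix y assume y: "y \<in> range f \<inter> {a..<a+L}"
      then obtain x where x: "y = f x" by blast
      show "y \<in> f ` {..<G} \<union> (f ` {G..} \<inter> {a..<a+L})"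
      proof (cases "x < G")
        case True then show ?thesis using x by blast
      next
        case False then have "x \<in> {G..}" by simp
        then show ?thesis using x y by blast
      qed
    qed
    then have "card (range f \<inter> {a..<a+L}) \<le> card (f ` {..<G} \<union> (f ` {G..} \<inter> {a..<a+L}))"
      by (rule card_mono[rotated]) auto
    also have "\<dots> \<le> card (f ` {..<G}) + card (f ` {G..} \<inter> {a..<a+L})" by (rule card_Un_le)
    also have "\<dots> \<le> G + card (f ` {G..} \<inter> {a..<a+L})"
      using card_image_le[of "{..<G}" f] by simp
    finally have "G * card (range f \<inter> {a..<a+L}) \<le> G * (G + card (f ` {G..} \<inter> {a..<a+L}))"
      by (rule mult_le_mono2)
    also have "\<dots> = G*G + G * card (f ` {G..} \<inter> {a..<a+L})" by (simp add: algebra_simps)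
    also have "\<dots> \<le> G*G + (L + G)" using gap_count[OF gap G, of a L] by simp
    finally show ?thesis by simp
  qed
  then show "\<exists>B. \<forall>a L. G * card (range f \<inter> {a..<a+L}) \<le> B + L" by blast
qed

lemma bd_mono: "banach_density_one F \<Longrightarrow> F \<subseteq> F' \<Longrightarrow> banach_density_one F'"
  unfolding banach_density_one_def
proof (intro allI impI)
  fix l :: real assume H: "\<forall>l::real. l < 1 \<longrightarrow> (\<exists>N\<ge>1. \<forall>a k. k \<ge> N \<longrightarrow>
      real (card (F \<inter> {a..<a + k})) \<ge> l * real (card {a..<a + k}))" and FF: "F \<subseteq> F'" and l: "l < 1"
  then obtain N where N: "N \<ge> 1" "\<forall>a k. k \<ge> N \<longrightarrow>
      real (card (F \<inter> {a..<a + k})) \<ge> l * real (card {a..<a + k})" by blast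
  have "real (card (F' \<inter> {a..<a + k})) \<ge> l * real (card {a..<a + k})" if "k \<ge> N" for a k
  proof -
    have "card (F \<inter> {a..<a + k}) \<le> card (F' \<inter> {a..<a + k})" by (rule card_mono) (use FF in auto)
    then show ?thesis using N(2) that by (meson of_nat_le_iff order.trans)
  qed
  then show "\<exists>N\<ge>1. \<forall>a k. k \<ge> N \<longrightarrow> real (card (F' \<inter> {a..<a + k})) \<ge> l * real (card {a..<a + k})"
    using N(1) by blast
qed



lemma real_aux:
  fixes c G m B k l :: real
  assumes h1: "G*c \<le> m*(B+k)" and h2: "2*m \<le> G*(1-l)" and l: "l < 1" and c: "0 \<le> c"
    and m: "0 < m" and Bk: "B \<le> k"
  shows "c \<le> (1-l)*k"
proof -
  have "2*m*c \<le> G*(1-l)*c" using mult_right_mono[OF h2 c] .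
  also have "\<dots> = (1-l)*(G*c)" by (simp add: algebra_simps)
  also have "\<dots> \<le> (1-l)*(m*(B+k))" using h1 l by (intro mult_left_mono) auto
  finally have "m*(2*c) \<le> m*((1-l)*(B+k))" by (simp add: algebra_simps)
  then have "2*c \<le> (1-l)*(B+k)" using m by simp
  also have "\<dots> \<le> (1-l)*(k+k)" using Bk l by (intro mult_left_mono) auto
  finally show ?thesis by (simp add: algebra_simps)
qed

lemma bd_sparse:
  assumes sp: "sparse A"
  shows "banach_density_one {n. \<forall>i\<le>M. n + i \<notin> A}"
  unfolding banach_density_one_def
proof (intro allI impI)
  fix l :: real assume l: "l < 1"
  define Gd where "Gd = {n. \<forall>i\<le>M. n + i \<notin> A}"
  define G :: nat where "G = nat \<lceil>2 * (real M + 1) / (1 - l)\<rceil> + 1"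
  have Gpos: "G > 0" unfolding G_def by simp
  have "2 * (real M + 1) / (1 - l) \<le> real G" unfolding G_def by linarith
  then have G2: "2 * (real M + 1) \<le> real G * (1 - l)" using l by (simp add: field_simps)
  obtain B where B: "\<forall>a L. G * card (A \<inter> {a..<a+L}) \<le> B + L"
    using sp Gpos unfolding sparse_def by blast
  have "real (card (Gd \<inter> {a..<a + k})) \<ge> l * real (card {a..<a + k})" if k: "k \<ge> B + 1" for a k
  proof -
    define W where "W = {a..<a+k}"
    have finW: "finite W" unfolding W_def by simp
    have "W - Gd \<subseteq> (\<Union>i\<in>{..M}. {n. n + i \<in> A} \<inter> W)" unfolding Gd_def by auto
    then have "card (W - Gd) \<le> card (\<Union>i\<in>{..M}. {n. n + i \<in> A} \<inter> W)"
      by (rule card_mono[rotated]) (simp add: finW)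
    also have "\<dots> \<le> (\<Sum>i\<in>{..M}. card ({n. n + i \<in> A} \<inter> W))" by (rule card_UN_le) simp
    finally have c1: "G * card (W - Gd) \<le> G * (\<Sum>i\<in>{..M}. card ({n. n + i \<in> A} \<inter> W))"
      by (rule mult_le_mono2)
    also have "\<dots> = (\<Sum>i\<in>{..M}. G * card ({n. n + i \<in> A} \<inter> W))" by (rule sum_distrib_left)
    also have "\<dots> \<le> (\<Sum>i\<in>{..M}. B + k)"
    proof (rule sum_mono)
      fix i assume "i \<in> {..M}"
      have "G * card ({n. n + i \<in> A} \<inter> W) \<le> G * card (A \<inter> {a+i..<a+i+k})"
        unfolding W_def by (rule mult_le_mono2[OF card_shift_window])
      also have "\<dots> \<le> B + k" using B by blast
      finally show "G * card ({n. n + i \<in> A} \<inter> W) \<le> B + k" .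
    qed
    also have "\<dots> = (M + 1) * (B + k)" by simp
    finally have c2: "G * card (W - Gd) \<le> (M + 1) * (B + k)" .
    have cW: "card W = k" unfolding W_def by simp
    have split: "card W = card (W \<inter> Gd) + card (W - Gd)" by (rule card_Int_Diff[OF finW])
    have c3: "real G * real (card (W - Gd)) \<le> (real M + 1) * (real B + real k)"
      using c2 by (metis of_nat_mult of_nat_le_iff of_nat_add of_nat_1)
    have "real (card (W - Gd)) \<le> (1 - l) * real k"
      by (rule real_aux[OF c3 G2 l]) (use k in auto)
    moreover have "real (card (W \<inter> Gd)) = real k - real (card (W - Gd))" using split cW by simp
    ultimately have "l * real k \<le> real (card (W \<inter> Gd))" by (simp add: algebra_simps)
    then show ?thesis unfolding W_def by (simp add: Int_commute)
  qed
  then show "\<exists>N\<ge>1. \<forall>a k. k \<ge> N \<longrightarrow> real (card ({n. \<forall>i\<le>M. n + i \<notin> A} \<inter> {a..<a + k}))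
      \<ge> l * real (card {a..<a + k})"
    unfolding Gd_def by (intro exI[of _ "B + 1"]) auto
qed

lemma proximal_sparse:
  assumes x: "x \<in> full_shift" and y: "y \<in> full_shift"
    and sx: "sparse {n. x n = 1}" and sy: "sparse {n. y n = 1}"
  shows "banach_proximal shift x y"
  unfolding banach_proximal_def
proof (intro allI impI)
  fix e :: real assume e: "e > 0"
  obtain M where M: "\<forall>x y :: nat \<Rightarrow> real. (\<forall>i\<le>M. x i = y i) \<longrightarrow> dist x y < e"
    using close_if_agree[OF e] by blast
  define A where "A = {n. x n = 1} \<union> {n. y n = 1}"
  have spA: "sparse A" unfolding A_def by (rule sparse_Un[OF sx sy])
  have "{n. \<forall>i\<le>M. n + i \<notin> A} \<subseteq> {n. dist ((shift ^^ n) x) ((shift ^^ n) y) < e}"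
  proof
    fix n assume n: "n \<in> {n. \<forall>i\<le>M. n + i \<notin> A}"
    have "(shift ^^ n) x i = (shift ^^ n) y i" if "i \<le> M" for i
    proof -
      have "x (i + n) \<noteq> 1" "y (i + n) \<noteq> 1" using n that unfolding A_def by (auto simp: add.commute)
      moreover have "x (i + n) \<in> {0,1}" "y (i + n) \<in> {0,1}" using x y unfolding full_shift_def by auto
      ultimately show ?thesis unfolding funpow_shift by auto
    qed
    then show "n \<in> {n. dist ((shift ^^ n) x) ((shift ^^ n) y) < e}" using M by blast
  qed
  then show "banach_density_one {n. dist ((shift ^^ n) x) ((shift ^^ n) y) < e}"
    by (rule bd_mono[OF bd_sparse[OF spA]])
qed

lemma not_asymptotic:
  assumes x: "x \<in> full_shift" and y: "y \<in> full_shift"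
    and d: "\<And>N. \<exists>n\<ge>N. x n \<noteq> y n"
  shows "\<not> asymptotic shift x y"
proof
  assume "asymptotic shift x y"
  then have lim: "(\<lambda>n. dist ((shift ^^ n) x) ((shift ^^ n) y)) \<longlonglongrightarrow> 0" unfolding asymptotic_def .
  have "(1/2::real)^(to_nat (0::nat)) > 0" by simp
  from LIMSEQ_D[OF lim this] obtain N where
    N: "\<forall>n\<ge>N. norm (dist ((shift ^^ n) x) ((shift ^^ n) y) - 0) < (1/2)^(to_nat (0::nat))" by blast
  obtain n where n: "n \<ge> N" "x n \<noteq> y n" using d by blast
  have sx: "(shift ^^ n) x \<in> full_shift" "(shift ^^ n) y \<in> full_shift"
    using x y unfolding funpow_shift full_shift_def by auto
  have "dist ((shift ^^ n) x) ((shift ^^ n) y) < (1/2)^(to_nat (0::nat))" using N n(1) by simp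
  then have "(shift ^^ n) x 0 = (shift ^^ n) y 0" by (rule full_shift_coord_eq[OF sx])
  then show False using n(2) unfolding funpow_shift by simp
qed

lemma pt_sparse:
  assumes tt: "top_transitive (spacing_shift P) shift"
  shows "sparse {n. pt P k j b n = 1}"
proof -
  have "{n. pt P k j b n = 1} \<subseteq> {n. n + j \<in> Fs P k} \<union> {n. n + j \<in> range (r P)}"
  proof
    fix n assume "n \<in> {n. pt P k j b n = 1}"
    then have "enc P k b (n + j) \<noteq> 0" unfolding pt_def by simp
    from enc_nz[OF tt this] show "n \<in> {n. n + j \<in> Fs P k} \<union> {n. n + j \<in> range (r P)}" by auto
  qed
  moreover have "sparse {n. n + j \<in> Fs P k}"
    by (rule sparse_finite, rule finite_subset[of _ "{..<ms k}"]) (auto dest: Fs_lt)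
  moreover have "sparse {n. n + j \<in> range (r P)}"
    by (rule sparse_shift, rule sparse_gap, rule r_gap[OF tt])
  ultimately show ?thesis by (meson sparse_Un sparse_subset)
qed

theorem mainTheorem5:
  fixes P :: "nat set"
  assumes "weakly_mixing (spacing_shift P) shift"
  shows "\<exists>S. S \<subseteq> spacing_shift P \<and> spacing_shift P \<subseteq> closure S \<and> mycielski S
           \<and> shift ` S \<subseteq> S \<and> banach_scrambled shift S"
proof -
  have tt: "top_transitive (spacing_shift P) shift" by (rule wm_trans[OF assms])
  define S where "S = SS P"
  have Sdef: "x \<in> S \<longleftrightarrow> (\<exists>k j b. x = pt P k j b \<and> b \<in> full_shift)" for x
    unfolding S_def SS_def[OF tt] by auto
  have sub: "S \<subseteq> spacing_shift P"
  proof
    fix x assume "x \<in> S"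
    then obtain k j b where "x = pt P k j b" "b \<in> full_shift" using Sdef by blast
    then show "x \<in> spacing_shift P" using pt_spacing[OF tt] by simp
  qed
  have dense: "spacing_shift P \<subseteq> closure S" unfolding S_def by (rule SS_dense[OF tt])
  define CC where "CC = (\<lambda>(k, j). (\<lambda>b. pt P k j b) ` full_shift) ` (UNIV :: (nat \<times> nat) set)"
  have myc: "mycielski S" unfolding mycielski_def
  proof (intro exI conjI)
    show "countable CC" unfolding CC_def by simp
    show "\<forall>C\<in>CC. cantor_set C" unfolding CC_def using pt_cantor[OF tt] by auto
    show "S = \<Union> CC"
    proof
      show "S \<subseteq> \<Union> CC"
      proof
        fix x assume "x \<in> S"
        then obtain k j b where kjb: "x = pt P k j b" "b \<in> full_shift" using Sdef by blast
        have "(\<lambda>b. pt P k j b) ` full_shift \<in> CC" unfolding CC_def by force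
        moreover have "x \<in> (\<lambda>b. pt P k j b) ` full_shift" using kjb by blast
        ultimately show "x \<in> \<Union> CC" by blast
      qed
      show "\<Union> CC \<subseteq> S" unfolding CC_def using Sdef by auto
    qed
  qed
  have shiftpt: "shift (pt P k j b) = pt P k (Suc j) b" for k j b
    unfolding shift_def pt_def by simp
  have inv: "shift ` S \<subseteq> S"
  proof
    fix y assume "y \<in> shift ` S"
    then obtain x where x: "y = shift x" "x \<in> S" by blast
    then obtain k j b where "x = pt P k j b" "b \<in> full_shift" using Sdef by blast
    then have "y = pt P k (Suc j) b" "b \<in> full_shift" using x shiftpt by auto
    then show "y \<in> S" using Sdef by blast
  qed
  have scr: "banach_scrambled shift S" unfolding banach_scrambled_def
  proof (intro conjI ballI impI)
    have z: "(\<lambda>_. 0) \<in> full_shift" unfolding full_shift_def by simp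
    obtain b' where b': "b' \<in> full_shift" "pt P 0 0 b' \<noteq> pt P 0 0 (\<lambda>_. 0)"
      using pt_perfect[OF tt z, of 1 0 0] by auto
    show "\<exists>x\<in>S. \<exists>y\<in>S. x \<noteq> y" using b' z Sdef by blast
  next
    fix x y assume xS: "x \<in> S" and yS: "y \<in> S" and xy: "x \<noteq> y"
    obtain k j b where x: "x = pt P k j b" "b \<in> full_shift" using xS Sdef by blast
    obtain k' j' b' where y: "y = pt P k' j' b'" "b' \<in> full_shift" using yS Sdef by blast
    have xf: "x \<in> full_shift" "y \<in> full_shift" using x y pt_full[OF tt] by auto
    show "banach_proximal shift x y"
      by (rule proximal_sparse[OF xf]) (use x y pt_sparse[OF tt] in auto)
    show "\<not> asymptotic shift x y"
      by (rule not_asymptotic[OF xf]) (use pt_diff[OF tt x(2) y(2)] x y xy in auto)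
  qed
  show ?thesis using sub dense myc inv scr by blast
qed


end
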